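(* Let $S\subset\mathbf R^4$ be a surface and let $p\in S$ satisfy $\Delta(p)=0$ and $K(p)=0$. Then $p$ is a critical point of $\Delta$ (so the discriminant curve $\Delta=0$ is singular at $p$) and this singularity is non-Morse, i.e. the Hessian determinant of $\Delta$ at $p$ vanishes.
   Context: With respect to a smooth adapted orthonormal moving frame $e_1,e_2$ (tangent), $e_3,e_4$ (normal), the second fundamental form is $\mathbf{II}(u)=(au_1^2+2bu_1u_2+cu_2^2)e_3+(eu_1^2+2fu_1u_2+gu_2^2)e_4$ for $u=u_1e_1+u_2e_2$; $a,\dots,g$ are smooth functions on $S$. The Gaussian curvature is $K=(ac-b^2)+(eg-f^2)$, and $\Delta=(ac-b^2)(eg-f^2)-\tfrac14(ag+ce-2bf)^2$, regarded as a smooth function on $S$ (in local coordinates); the discriminant curve is $\{\Delta=0\}$. *)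

theory Defs
  imports "HOL-Analysis.Analysis"
begin

text \<open>Local coordinates on the surface S: an open set U of the plane, points of type
  real \<times> real.  Coefficient functions of the second fundamental form are real-valued
  functions on U.\<close>

definition pderiv2 :: "(real \<times> real \<Rightarrow> real) \<Rightarrow> real \<times> real \<Rightarrow> real \<times> real \<Rightarrow> real" where
  "pderiv2 f v x = frechet_derivative f (at x) v"

fun Ck_on :: "nat \<Rightarrow> (real \<times> real) set \<Rightarrow> (real \<times> real \<Rightarrow> real) \<Rightarrow> bool" where
  "Ck_on 0 U f = continuous_on U f"
| "Ck_on (Suc k) U f = (f differentiable_on U \<and> (\<forall>v. Ck_on k U (\<lambda>x. pderiv2 f v x)))"

definition smooth_on_plane :: "(real \<times> real) set \<Rightarrow> (real \<times> real \<Rightarrow> real) \<Rightarrow> bool" where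
  "smooth_on_plane U f = (\<forall>k. Ck_on k U f)"

definition gaussK :: "real \<Rightarrow> real \<Rightarrow> real \<Rightarrow> real \<Rightarrow> real \<Rightarrow> real \<Rightarrow> real" where
  "gaussK a b c e f g = (a*c - b^2) + (e*g - f^2)"

definition discr :: "real \<Rightarrow> real \<Rightarrow> real \<Rightarrow> real \<Rightarrow> real \<Rightarrow> real \<Rightarrow> real" where
  "discr a b c e f g = (a*c - b^2) * (e*g - f^2) - (1/4) * (a*g + c*e - 2*b*f)^2"

definition hessian_det :: "(real \<times> real \<Rightarrow> real) \<Rightarrow> real \<times> real \<Rightarrow> real" where
  "hessian_det F p =
     pderiv2 (pderiv2 F (1,0)) (1,0) p * pderiv2 (pderiv2 F (0,1)) (0,1) p
   - pderiv2 (pderiv2 F (0,1)) (1,0) p * pderiv2 (pderiv2 F (1,0)) (0,1) p"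

end

theory Submission
  imports Defs
begin

lemma pd_has: "(F has_derivative F') (at x) \<Longrightarrow> pderiv2 F v x = F' v"
  unfolding pderiv2_def by (metis frechet_derivative_at)

lemma pd_cong:
  assumes "G differentiable at x" "open U" "x \<in> U" "\<And>y. y \<in> U \<Longrightarrow> F y = G y"
  shows "pderiv2 F v x = pderiv2 G v x"
  unfolding pderiv2_def
  using frechet_derivative_transform_within_open[OF assms(1,2,3), of F] assms(4) by metis

lemma diff_cong:
  assumes "G differentiable at x" "open U" "x \<in> U" "\<And>y. y \<in> U \<Longrightarrow> F y = G y"
  shows "F differentiable at x"
  using assms has_derivative_transform_within_open unfolding differentiable_def by metis

lemma pd_works: "F differentiable at x \<Longrightarrow> (F has_derivative (\<lambda>h. pderiv2 F h x)) (at x)"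
  unfolding pderiv2_def using frechet_derivative_works by (metis eta_contract_eq)

lemma pd_mult:
  assumes "F differentiable at x" "G differentiable at x"
  shows "pderiv2 (\<lambda>y. F y * G y) v x = F x * pderiv2 G v x + pderiv2 F v x * G x"
  by (rule pd_has[OF has_derivative_mult[OF pd_works[OF assms(1)] pd_works[OF assms(2)]]])

lemma pd_add:
  assumes "F differentiable at x" "G differentiable at x"
  shows "pderiv2 (\<lambda>y. F y + G y) v x = pderiv2 F v x + pderiv2 G v x"
  by (rule pd_has[OF has_derivative_add[OF pd_works[OF assms(1)] pd_works[OF assms(2)]]])

lemma pd_diff:
  assumes "F differentiable at x" "G differentiable at x"
  shows "pderiv2 (\<lambda>y. F y - G y) v x = pderiv2 F v x - pderiv2 G v x"
  by (rule pd_has[OF has_derivative_diff[OF pd_works[OF assms(1)] pd_works[OF assms(2)]]])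

lemma pd_cmult:
  assumes "F differentiable at x"
  shows "pderiv2 (\<lambda>y. k * F y) v x = k * pderiv2 F v x"
  by (rule pd_has[OF has_derivative_mult_right[OF pd_works[OF assms(1)]]])

lemma pd_const: "pderiv2 (\<lambda>y. k) v x = 0"
  by (rule pd_has[OF has_derivative_const])

lemma pd_sq:
  assumes "F differentiable at x"
  shows "pderiv2 (\<lambda>y. (F y)^2) v x = 2 * F x * pderiv2 F v x"
  using pd_mult[OF assms assms, of v] by (simp add: power2_eq_square)

lemma smooth2:
  assumes "smooth_on_plane U a" "open U" "x \<in> U"
  shows "a differentiable at x" "\<And>v. (\<lambda>y. pderiv2 a v y) differentiable at x"
proof -
  have "Ck_on (Suc (Suc 0)) U a" using assms(1) unfolding smooth_on_plane_def by blast
  hence "a differentiable_on U" "\<And>v. (\<lambda>y. pderiv2 a v y) differentiable_on U" by auto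
  thus "a differentiable at x" "\<And>v. (\<lambda>y. pderiv2 a v y) differentiable at x"
    using assms(2,3) by (auto simp: differentiable_on_eq_differentiable_at)
qed


lemma alg_H:
  fixes a b c e f g a1 b1 c1 e1 f1 g1 a2 b2 c2 e2 f2 g2 :: real
  assumes "a*g = c*e" "b*g = c*f" "a*f = b*e"
  shows "(a*c2 + a2*c - 2*b*b2) * (e*g1 + e1*g - 2*f*f1)
       + (a*c1 + a1*c - 2*b*b1) * (e*g2 + e2*g - 2*f*f2)
       - 1/2 * (a*g2 + a2*g + (c*e2 + c2*e) - 2*(b*f2 + b2*f))
              * (a*g1 + a1*g + (c*e1 + c1*e) - 2*(b*f1 + b1*f))
     = -1/2 * ((c*e1 - 2*b*f1 + a*g1) - (g*a1 - 2*f*b1 + e*c1))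
            * ((c*e2 - 2*b*f2 + a*g2) - (g*a2 - 2*f*b2 + e*c2))"
  using assms by algebra

lemma alg_minors:
  fixes a b c e f g :: real
  assumes "a*c - b^2 = 0" "e*g - f^2 = 0" "a*g + c*e - 2*(b*f) = 0"
  shows "a*g = c*e" "b*g = c*f" "a*f = b*e"
proof -
  have "(a*g - c*e)^2 = 0" using assms by algebra
  thus "a*g = c*e" by simp
  have "(b*g - c*f)^2 = 0" using assms by algebra
  thus "b*g = c*f" by simp
  have "(a*f - b*e)^2 = 0" using assms by algebra
  thus "a*f = b*e" by simp
qed


theorem mainTheorem6:
  fixes U :: "(real \<times> real) set" and p :: "real \<times> real"
    and a b c e f g :: "real \<times> real \<Rightarrow> real"
  assumes "open U" and "p \<in> U"
    and "smooth_on_plane U a" and "smooth_on_plane U b" and "smooth_on_plane U c"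
    and "smooth_on_plane U e" and "smooth_on_plane U f" and "smooth_on_plane U g"
    and "discr (a p) (b p) (c p) (e p) (f p) (g p) = 0"
    and "gaussK (a p) (b p) (c p) (e p) (f p) (g p) = 0"
  shows "((\<lambda>x. discr (a x) (b x) (c x) (e x) (f x) (g x)) has_derivative (\<lambda>h. 0)) (at p)
    \<and> hessian_det (\<lambda>x. discr (a x) (b x) (c x) (e x) (f x) (g x)) p = 0"
proof -
  note sm = smooth2[OF assms(3) assms(1)] smooth2[OF assms(4) assms(1)] smooth2[OF assms(5) assms(1)]
    smooth2[OF assms(6) assms(1)] smooth2[OF assms(7) assms(1)] smooth2[OF assms(8) assms(1)]
  define A where "A = (\<lambda>y. a y * c y - (b y)^2)"
  define B where "B = (\<lambda>y. e y * g y - (f y)^2)"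
  define C where "C = (\<lambda>y. a y * g y + c y * e y - 2 * (b y * f y))"
  define D where "D = (\<lambda>x. discr (a x) (b x) (c x) (e x) (f x) (g x))"
  define A1 where "A1 = (\<lambda>v y. a y * pderiv2 c v y + pderiv2 a v y * c y - 2 * b y * pderiv2 b v y)"
  define B1 where "B1 = (\<lambda>v y. e y * pderiv2 g v y + pderiv2 e v y * g y - 2 * f y * pderiv2 f v y)"
  define C1 where "C1 = (\<lambda>v y. a y * pderiv2 g v y + pderiv2 a v y * g y
      + (c y * pderiv2 e v y + pderiv2 c v y * e y) - 2 * (b y * pderiv2 f v y + pderiv2 b v y * f y))"
  have Deq: "D = (\<lambda>y. A y * B y - 1/4 * (C y)^2)"
    unfolding D_def A_def B_def C_def discr_def by (simp add: algebra_simps)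
  have ABC: "A p = 0" "B p = 0" "C p = 0"
  proof -
    have h1: "A p + B p = 0" using assms(10) unfolding gaussK_def A_def B_def by simp
    have "D p = A p * B p - 1/4 * (C p)^2" using Deq by simp
    hence h2: "A p * B p - 1/4 * (C p)^2 = 0" using assms(9) unfolding D_def by simp
    have "A p ^2 + 1/4 * (C p)^2 = 0" using h1 h2 by algebra
    hence "A p ^2 = 0" "C p ^ 2 = 0" using zero_le_power2[of "A p"] zero_le_power2[of "C p"] by linarith+
    hence "A p = 0" "C p = 0" by simp_all
    thus "A p = 0" "B p = 0" "C p = 0" using h1 by auto
  qed
  have dA: "pderiv2 A v y = A1 v y" if "y \<in> U" for v y
    using smooth2[OF assms(3) assms(1) that] smooth2[OF assms(4) assms(1) that] smooth2[OF assms(5) assms(1) that]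
    unfolding A_def A1_def by (simp add: pd_diff pd_mult pd_sq)
  have dB: "pderiv2 B v y = B1 v y" if "y \<in> U" for v y
    using smooth2[OF assms(6) assms(1) that] smooth2[OF assms(7) assms(1) that] smooth2[OF assms(8) assms(1) that]
    unfolding B_def B1_def by (simp add: pd_diff pd_mult pd_sq)
  have dC: "pderiv2 C v y = C1 v y" if "y \<in> U" for v y
    using smooth2[OF assms(3) assms(1) that] smooth2[OF assms(4) assms(1) that] smooth2[OF assms(5) assms(1) that]
     smooth2[OF assms(6) assms(1) that] smooth2[OF assms(7) assms(1) that] smooth2[OF assms(8) assms(1) that]
    unfolding C_def C1_def by (simp add: pd_diff pd_mult pd_add pd_cmult pd_const)
  have difABC: "A differentiable at y" "B differentiable at y" "C differentiable at y" if "y \<in> U" for y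
    using smooth2[OF assms(3) assms(1) that] smooth2[OF assms(4) assms(1) that] smooth2[OF assms(5) assms(1) that]
     smooth2[OF assms(6) assms(1) that] smooth2[OF assms(7) assms(1) that] smooth2[OF assms(8) assms(1) that]
    unfolding A_def B_def C_def by simp_all
  have dD: "pderiv2 D v y = A y * B1 v y + A1 v y * B y - 1/4 * (2 * C y * C1 v y)" if "y \<in> U" for v y
    using difABC[OF that] unfolding Deq
    by (simp only: pd_diff pd_mult pd_sq pd_cmult pd_const dA[OF that] dB[OF that] dC[OF that]
        differentiable_mult differentiable_diff differentiable_power differentiable_const mult_zero_left add_0_right)
  have difD: "D differentiable at p" using difABC[OF assms(2)] unfolding Deq by simp
  have part1: "(D has_derivative (\<lambda>h. 0)) (at p)"
  proof -
    have "(\<lambda>h. pderiv2 D h p) = (\<lambda>h. 0)" using dD[OF assms(2)] ABC by simp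
    thus ?thesis using pd_works[OF difD] by simp
  qed
  have dA1: "(\<lambda>y. A1 v y) differentiable at p" "(\<lambda>y. B1 v y) differentiable at p"
      "(\<lambda>y. C1 v y) differentiable at p" for v
    using smooth2[OF assms(3) assms(1) assms(2)] smooth2[OF assms(4) assms(1) assms(2)] smooth2[OF assms(5) assms(1) assms(2)]
     smooth2[OF assms(6) assms(1) assms(2)] smooth2[OF assms(7) assms(1) assms(2)] smooth2[OF assms(8) assms(1) assms(2)]
    unfolding A1_def B1_def C1_def by simp_all
  have H: "pderiv2 (pderiv2 D v) w p = A1 w p * B1 v p + A1 v p * B1 w p - 1/2 * C1 w p * C1 v p" for v w
  proof -
    have "pderiv2 (pderiv2 D v) w p
        = pderiv2 (\<lambda>y. A y * B1 v y + A1 v y * B y - 1/4 * (2 * C y * C1 v y)) w p"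
      apply (rule pd_cong[OF _ assms(1) assms(2)])
      using difABC[OF assms(2)] dA1 apply simp
      using dD by simp
    also have "\<dots> = A1 w p * B1 v p + A1 v p * B1 w p - 1/2 * C1 w p * C1 v p"
      using difABC[OF assms(2)] dA1[of v] ABC
      apply (simp only: pd_diff pd_mult pd_add pd_cmult pd_const dA[OF assms(2)] dB[OF assms(2)] dC[OF assms(2)]
        differentiable_mult differentiable_diff differentiable_add differentiable_const)
      by (simp add: algebra_simps)
    finally show ?thesis .
  qed
  have mins: "a p * g p = c p * e p" "b p * g p = c p * f p" "a p * f p = b p * e p"
    using alg_minors[of "a p" "c p" "b p" "e p" "g p" "f p"] ABC unfolding A_def B_def C_def by auto
  define l where "l = (\<lambda>v. (c p * pderiv2 e v p - 2 * b p * pderiv2 f v p + a p * pderiv2 g v p)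
      - (g p * pderiv2 a v p - 2 * f p * pderiv2 b v p + e p * pderiv2 c v p))"
  have H2: "pderiv2 (pderiv2 D v) w p = -1/2 * l v * l w" for v w
    unfolding H A1_def B1_def C1_def l_def by (rule alg_H[OF mins])
  have "hessian_det D p = 0" unfolding hessian_det_def H2 by (simp add: algebra_simps)
  thus ?thesis using part1 unfolding D_def by simp
qed

end
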